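(* Let $(X,d)$ be a metric space, $\mu$ a non-atomic Borel measure on $X$, $m$ a Borel measure on $X$, $0<p<\infty$, and let $\Gamma^*\subset\Gamma^\mu$ be a family of paths closed under taking non-trivial subpaths such that any two points of $X$ are joined by a path in $\Gamma^*$. Let $F$ be a closed subset of $X$ and let $f:X\to\mathbb R$ be $ACC_p$ with $f=0$ $m$-almost everywhere on $F$. If $\rho$ is an upper gradient of $f$, then $\rho\chi_{X\setminus F}$ is a $p$-weak upper gradient of $f$.
   Context: A path is a continuous map $\gamma:[a,b]\to X$; a subpath is a restriction to a subinterval, trivial if that interval is a point; $\mathrm{Im}(\gamma)=\gamma([a,b])$. $\mu$ non-atomic: $\mu(\{x\})=0$ for all $x$. $\Gamma^\mu$ is the set of all non-trivial injective paths $\gamma$ with $0<\mu(\mathrm{Im}(\tilde\gamma))<\infty$ for every non-trivial subpath $\tilde\gamma$. For Borel $g\ge0$, $\int_\gamma g:=\int_{\mathrm{Im}(\gamma)}g\,d\mu$. For $\gamma:[a,b]\to X$ in $\Gamma^\mu$, $h(\gamma)=\mu(\mathrm{Im}(\gamma))$, $\nu_\gamma(x)=\mu(\gamma([a,x]))$ (a bijection onto $[0,h(\gamma)]$), $\gamma_h=\gamma\circ\nu_\gamma^{-1}$. For $\Gamma\subset\Gamma^*$, $\mathrm{Mod}_p(\Gamma)=\inf\int_Xg^p\,dm$ over Borel $g\ge0$ with $\int_\gamma g\ge1$ for all $\gamma\in\Gamma$; "$p$-almost every path" means all paths of $\Gamma^*$ outside a family of $p$-modulus zero. A Borel $\rho\ge0$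 is an upper gradient of $f$ if $|f(x)-f(y)|\le\int_\gamma\rho$ for every $\gamma\in\Gamma^*$ with endpoints $x,y$ (with $f(x),f(y)$ finite), and a $p$-weak upper gradient if this holds for $p$-almost every $\gamma\in\Gamma^*$. $f$ is $ACC_p$ if $f\circ\gamma_h$ is absolutely continuous for $p$-almost every $\gamma\in\Gamma^*$. *)

theory Defs
  imports "HOL-Analysis.Analysis"
begin

(* A path gamma : [a,b] -> X is represented by a triple (a, b, g) with a <= b and
   g continuous on {a..b}; values of g outside {a..b} are irrelevant. *)
type_synonym 'a cpath = "real \<times> real \<times> (real \<Rightarrow> 'a)"

definition pa :: "'a cpath \<Rightarrow> real" where "pa \<gamma> = fst \<gamma>"
definition pb :: "'a cpath \<Rightarrow> real" where "pb \<gamma> = fst (snd \<gamma>)"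
definition pf :: "'a cpath \<Rightarrow> real \<Rightarrow> 'a" where "pf \<gamma> = snd (snd \<gamma>)"

definition is_cpath :: "'a::topological_space cpath \<Rightarrow> bool" where
  "is_cpath \<gamma> \<longleftrightarrow> pa \<gamma> \<le> pb \<gamma> \<and> continuous_on {pa \<gamma>..pb \<gamma>} (pf \<gamma>)"

definition pIm :: "'a cpath \<Rightarrow> 'a set" where
  "pIm \<gamma> = pf \<gamma> ` {pa \<gamma>..pb \<gamma>}"

definition is_restriction :: "'a cpath \<Rightarrow> real \<Rightarrow> real \<Rightarrow> 'a cpath \<Rightarrow> bool" where
  "is_restriction \<gamma> c d \<delta> \<longleftrightarrow> pa \<delta> = c \<and> pb \<delta> = d \<and> (\<forall>t\<in>{c..d}. pf \<delta> t = pf \<gamma> t)"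

definition Gamma_mu :: "'a::topological_space measure \<Rightarrow> 'a cpath set" where
  "Gamma_mu \<mu> = {\<gamma>. is_cpath \<gamma> \<and> pa \<gamma> < pb \<gamma> \<and> inj_on (pf \<gamma>) {pa \<gamma>..pb \<gamma>} \<and>
      (\<forall>c d. pa \<gamma> \<le> c \<and> c < d \<and> d \<le> pb \<gamma> \<longrightarrow>
          0 < emeasure \<mu> (pf \<gamma> ` {c..d}) \<and> emeasure \<mu> (pf \<gamma> ` {c..d}) < \<infinity>)}"

definition line_int :: "'a measure \<Rightarrow> 'a cpath \<Rightarrow> ('a \<Rightarrow> ennreal) \<Rightarrow> ennreal" where
  "line_int \<mu> \<gamma> g = (\<integral>\<^sup>+ x \<in> pIm \<gamma>. g x \<partial>\<mu>)"

definition epowr :: "ennreal \<Rightarrow> real \<Rightarrow> ennreal" where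
  "epowr x p = (if x = top then top else ennreal (enn2real x powr p))"

definition Modp :: "real \<Rightarrow> 'a::topological_space measure \<Rightarrow> 'a measure \<Rightarrow> 'a cpath set \<Rightarrow> ennreal" where
  "Modp p m \<mu> \<Gamma> = (INF g \<in> {g. g \<in> borel_measurable borel \<and> (\<forall>\<gamma>\<in>\<Gamma>. line_int \<mu> \<gamma> g \<ge> 1)}.
       \<integral>\<^sup>+ x. epowr (g x) p \<partial>m)"

definition p_ae_paths :: "real \<Rightarrow> 'a::topological_space measure \<Rightarrow> 'a measure \<Rightarrow> 'a cpath set \<Rightarrow> ('a cpath \<Rightarrow> bool) \<Rightarrow> bool" where
  "p_ae_paths p m \<mu> \<Gamma>s P \<longleftrightarrow> (\<exists>\<Gamma>0 \<subseteq> \<Gamma>s. Modp p m \<mu> \<Gamma>0 = 0 \<and> (\<forall>\<gamma>\<in>\<Gamma>s - \<Gamma>0. P \<gamma>))"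

definition upper_gradient_ineq :: "'a measure \<Rightarrow> ('a \<Rightarrow> real) \<Rightarrow> ('a \<Rightarrow> ennreal) \<Rightarrow> 'a cpath \<Rightarrow> bool" where
  "upper_gradient_ineq \<mu> f \<rho> \<gamma> \<longleftrightarrow>
     ennreal \<bar>f (pf \<gamma> (pa \<gamma>)) - f (pf \<gamma> (pb \<gamma>))\<bar> \<le> line_int \<mu> \<gamma> \<rho>"

definition upper_gradient :: "'a::topological_space measure \<Rightarrow> 'a cpath set \<Rightarrow> ('a \<Rightarrow> real) \<Rightarrow> ('a \<Rightarrow> ennreal) \<Rightarrow> bool" where
  "upper_gradient \<mu> \<Gamma>s f \<rho> \<longleftrightarrow> \<rho> \<in> borel_measurable borel \<and> (\<forall>\<gamma>\<in>\<Gamma>s. upper_gradient_ineq \<mu> f \<rho> \<gamma>)"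

definition weak_upper_gradient :: "real \<Rightarrow> 'a::topological_space measure \<Rightarrow> 'a measure \<Rightarrow> 'a cpath set \<Rightarrow> ('a \<Rightarrow> real) \<Rightarrow> ('a \<Rightarrow> ennreal) \<Rightarrow> bool" where
  "weak_upper_gradient p m \<mu> \<Gamma>s f \<rho> \<longleftrightarrow> \<rho> \<in> borel_measurable borel \<and>
     p_ae_paths p m \<mu> \<Gamma>s (upper_gradient_ineq \<mu> f \<rho>)"

definition abs_cont_on :: "real \<Rightarrow> real \<Rightarrow> (real \<Rightarrow> real) \<Rightarrow> bool" where
  "abs_cont_on c d u \<longleftrightarrow> (\<forall>\<epsilon>>0. \<exists>\<delta>>0. \<forall>(n::nat) (I::nat \<Rightarrow> real \<times> real).
      (\<forall>i<n. c \<le> fst (I i) \<and> fst (I i) \<le> snd (I i) \<and> snd (I i) \<le> d) \<and>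
      (\<forall>i<n. \<forall>j<n. i \<noteq> j \<longrightarrow> snd (I i) \<le> fst (I j) \<or> snd (I j) \<le> fst (I i)) \<and>
      (\<Sum>i<n. snd (I i) - fst (I i)) < \<delta> \<longrightarrow>
      (\<Sum>i<n. \<bar>u (snd (I i)) - u (fst (I i))\<bar>) < \<epsilon>)"

definition hlen :: "'a measure \<Rightarrow> 'a cpath \<Rightarrow> real" where
  "hlen \<mu> \<gamma> = measure \<mu> (pIm \<gamma>)"

definition nu_path :: "'a measure \<Rightarrow> 'a cpath \<Rightarrow> real \<Rightarrow> real" where
  "nu_path \<mu> \<gamma> x = measure \<mu> (pf \<gamma> ` {pa \<gamma>..x})"

definition gamma_h :: "'a measure \<Rightarrow> 'a cpath \<Rightarrow> real \<Rightarrow> 'a" where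
  "gamma_h \<mu> \<gamma> = pf \<gamma> \<circ> inv_into {pa \<gamma>..pb \<gamma>} (nu_path \<mu> \<gamma>)"

definition ACC_p :: "real \<Rightarrow> 'a::topological_space measure \<Rightarrow> 'a measure \<Rightarrow> 'a cpath set \<Rightarrow> ('a \<Rightarrow> real) \<Rightarrow> bool" where
  "ACC_p p m \<mu> \<Gamma>s f \<longleftrightarrow> p_ae_paths p m \<mu> \<Gamma>s (\<lambda>\<gamma>. abs_cont_on 0 (hlen \<mu> \<gamma>) (f \<circ> gamma_h \<mu> \<gamma>))"

end

theory Submission
  imports Defs "HOL-Probability.Distribution_Functions"
begin

lemma sum_nn_integral_intervals_le:
  fixes M :: "real measure" and I :: "'i \<Rightarrow> real \<times> real"
  assumes sets: "sets M = sets borel" and atom: "\<And>x. emeasure M {x} = 0"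
    and fin: "finite S"
    and ord: "\<And>i j. i\<in>S \<Longrightarrow> j\<in>S \<Longrightarrow> i \<noteq> j \<Longrightarrow> snd (I i) \<le> fst (I j) \<or> snd (I j) \<le> fst (I i)"
    and sub: "\<And>i. i\<in>S \<Longrightarrow> {fst (I i)..snd (I i)} \<subseteq> A"
    and w: "w \<in> borel_measurable borel"
  shows "(\<Sum>i\<in>S. \<integral>\<^sup>+x\<in>{fst (I i)..snd (I i)}. w x \<partial>M) \<le> (\<integral>\<^sup>+x\<in>A. w x \<partial>M)"
proof -
  have wM: "w \<in> borel_measurable M" using w by (simp add: measurable_cong_sets[OF sets refl])
  let ?E = "fst ` I ` S \<union> snd ` I ` S"
  have AE: "AE x in M. x \<notin> ?E"
    by (rule AE_discrete_difference) (simp_all add: atom fin sets countable_finite)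
  have "(\<Sum>i\<in>S. \<integral>\<^sup>+x\<in>{fst (I i)..snd (I i)}. w x \<partial>M) = 
     (\<integral>\<^sup>+x. (\<Sum>i\<in>S. w x * indicator {fst (I i)..snd (I i)} x) \<partial>M)"
    by (rule nn_integral_sum[symmetric]) (use wM sets in auto)
  also have "\<dots> \<le> (\<integral>\<^sup>+x\<in>A. w x \<partial>M)"
  proof (rule nn_integral_mono_AE)
    show "AE x in M. (\<Sum>i\<in>S. w x * indicator {fst (I i)..snd (I i)} x) \<le> w x * indicator A x"
      using AE
    proof eventually_elim
      case (elim x)
      show ?case
      proof (cases "\<exists>i\<in>S. x \<in> {fst (I i)..snd (I i)}")
        case False
        then have "(\<Sum>i\<in>S. w x * indicator {fst (I i)..snd (I i)} x) = 0"
          by (intro sum.neutral) auto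
        then show ?thesis by simp
      next
        case True
        then obtain i0 where i0: "i0 \<in> S" "x \<in> {fst (I i0)..snd (I i0)}" by blast
        have xi: "fst (I i0) < x" "x < snd (I i0)"
        proof -
          have "fst (I i0) \<noteq> x" "snd (I i0) \<noteq> x" using elim i0(1) by auto
          then show "fst (I i0) < x" "x < snd (I i0)" using i0(2) by auto
        qed
        have "(\<Sum>i\<in>S. w x * indicator {fst (I i)..snd (I i)} x)
            = w x * indicator {fst (I i0)..snd (I i0)} x + (\<Sum>i\<in>S-{i0}. w x * indicator {fst (I i)..snd (I i)} x)"
          using fin i0(1) by (rule sum.remove)
        also have "(\<Sum>i\<in>S-{i0}. w x * indicator {fst (I i)..snd (I i)} x) = 0"
        proof (intro sum.neutral ballI)
          fix j assume j: "j \<in> S - {i0}"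
          have "x \<notin> {fst (I j)..snd (I j)}"
          proof
            assume xj: "x \<in> {fst (I j)..snd (I j)}"
            have "fst (I j) \<noteq> x" "snd (I j) \<noteq> x" using elim j by auto
            then have "fst (I j) < x" "x < snd (I j)" using xj by auto
            then show False using ord[of i0 j] j i0(1) xi by auto
          qed
          then show "w x * indicator {fst (I j)..snd (I j)} x = 0" by simp
        qed
        finally show ?thesis using i0 sub[OF i0(1)] by (auto simp: indicator_def)
      qed
    qed
  qed
  finally show ?thesis .
qed


lemma disj_intervals_ord:
  fixes c d c' d' :: real
  assumes "c < d" "c' < d'" "{c<..<d} \<inter> {c'<..<d'} = {}"
  shows "d \<le> c' \<or> d' \<le> c"
proof (rule ccontr)
  assume "\<not> (d \<le> c' \<or> d' \<le> c)"
  then have "c' < d" "c < d'" by auto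
  then have "max c c' < min d d'" using assms by simp
  then have "(max c c' + min d d') / 2 \<in> {c<..<d} \<inter> {c'<..<d'}"
    by auto
  then show False using assms(3) by blast
qed

lemma piece:
  fixes u :: "real \<Rightarrow> real" and M :: "real measure" and w :: "real \<Rightarrow> ennreal" and U V :: "real set"
  assumes sets: "sets M = sets borel" and atom: "\<And>x. emeasure M {x} = 0"
    and w: "w \<in> borel_measurable borel"
    and UO: "open U" "open V" and st: "s \<le> t" and cov: "{s..t} \<subseteq> U \<union> V"
    and UG: "\<And>c d. s \<le> c \<Longrightarrow> c < d \<Longrightarrow> d \<le> t \<Longrightarrow> {c..d} \<subseteq> U \<Longrightarrow>
               ennreal \<bar>u d - u c\<bar> \<le> (\<integral>\<^sup>+x\<in>{c..d}. w x \<partial>M)"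
    and AC: "\<And>(P :: (real \<times> real set) set) I. finite P \<Longrightarrow>
        (\<And>i. i\<in>P \<Longrightarrow> s \<le> fst (I i) \<and> fst (I i) < snd (I i) \<and> snd (I i) \<le> t \<and> {fst (I i)..snd (I i)} \<subseteq> V) \<Longrightarrow>
        (\<And>i j. i\<in>P \<Longrightarrow> j\<in>P \<Longrightarrow> i \<noteq> j \<Longrightarrow> snd (I i) \<le> fst (I j) \<or> snd (I j) \<le> fst (I i)) \<Longrightarrow>
        (\<Sum>i\<in>P. \<bar>u (snd (I i)) - u (fst (I i))\<bar>) < e"
  shows "ennreal \<bar>u t - u s\<bar> \<le> (\<integral>\<^sup>+x\<in>{s..t}. w x \<partial>M) + ennreal e"
proof -
  define g where "g x = (if x \<in> U then U else if x \<in> V then V else UNIV)" for x :: real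
  have "gauge g" unfolding gauge_def g_def using UO by auto
  then obtain p where p: "p tagged_division_of {s..t}" "g fine p"
    using fine_division_exists_real by blast
  define I where "I = (\<lambda>(x::real,k::real set). (Inf k, Sup k))"
  have kf: "k = {fst (I (x,k))..snd (I (x,k))} \<and> fst (I (x,k)) \<le> snd (I (x,k)) \<and> x \<in> k \<and> k \<subseteq> {s..t} \<and> k \<subseteq> g x \<and> s \<le> fst (I (x,k)) \<and> snd (I (x,k)) \<le> t"
    if xk: "(x,k) \<in> p" for x k
  proof -
    obtain a b where k: "k = cbox a b" using tagged_division_ofD(4)[OF p(1) xk] by blast
    have xk': "x \<in> k" using tagged_division_ofD(2)[OF p(1) xk] .
    then have ab: "a \<le> b" using k by auto
    have "I (x,k) = (a,b)" using ab k by (simp add: I_def)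
    moreover have "a \<in> k" "b \<in> k" using k ab by auto
    ultimately show ?thesis using k ab xk' tagged_division_ofD(3)[OF p(1) xk] p(2) xk
      by (auto simp: fine_def)
  qed
  have fin: "finite p" using p(1) by blast
  have disj: "snd (I i) \<le> fst (I j) \<or> snd (I j) \<le> fst (I i)"
    if "i \<in> p" "j \<in> p" "i \<noteq> j" "fst (I i) < snd (I i)" "fst (I j) < snd (I j)" for i j
  proof -
    obtain x k x' k' where ij: "i = (x,k)" "j = (x',k')" by fastforce
    have "interior k \<inter> interior k' = {}"
      using tagged_division_ofD(5)[OF p(1)] that ij by blast
    moreover have "k = {fst (I i)..snd (I i)}" "k' = {fst (I j)..snd (I j)}" using kf that ij by auto
    ultimately show ?thesis using disj_intervals_ord that by auto
  qed
  define D where "D i = \<bar>u (snd (I i)) - u (fst (I i))\<bar>" for i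
  define PU where "PU = {i\<in>p. fst i \<in> U \<and> fst (I i) < snd (I i)}"
  define PO where "PO = {i\<in>p. fst i \<notin> U \<and> fst (I i) < snd (I i)}"
  have tele: "(\<Sum>(x,k)\<in>p. u (Sup k) - u (Inf k)) = u t - u s"
    by (rule additive_tagged_division_1[OF st p(1)])
  have "\<bar>u t - u s\<bar> \<le> (\<Sum>i\<in>p. D i)"
    unfolding tele[symmetric] D_def I_def
    by (rule order_trans[OF sum_abs]) (auto simp: case_prod_beta intro!: sum_mono)
  also have "(\<Sum>i\<in>p. D i) = (\<Sum>i\<in>PU \<union> PO. D i)"
  proof (rule sum.mono_neutral_right[OF fin])
    show "PU \<union> PO \<subseteq> p" unfolding PU_def PO_def by auto
    show "\<forall>i\<in>p - (PU \<union> PO). D i = 0"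
    proof
      fix i assume i: "i \<in> p - (PU \<union> PO)"
      then have "\<not> fst (I i) < snd (I i)" unfolding PU_def PO_def by auto
      moreover have "fst (I i) \<le> snd (I i)" using kf[of "fst i" "snd i"] i by auto
      ultimately show "D i = 0" unfolding D_def by auto
    qed
  qed
  also have "\<dots> = (\<Sum>i\<in>PU. D i) + (\<Sum>i\<in>PO. D i)"
    by (rule sum.union_disjoint) (use fin in \<open>auto simp: PU_def PO_def\<close>)
  finally have main: "\<bar>u t - u s\<bar> \<le> (\<Sum>i\<in>PU. D i) + (\<Sum>i\<in>PO. D i)" .
  have PO_small: "(\<Sum>i\<in>PO. D i) < e"
    unfolding D_def
  proof (rule AC)
    show "finite PO" using fin unfolding PO_def by auto
  next
    fix i assume i: "i \<in> PO"
    obtain x k where xk: "i = (x,k)" by fastforce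
    have "(x,k) \<in> p" "x \<notin> U" "fst (I i) < snd (I i)" using i xk PO_def by auto
    moreover from this have "x \<in> V" using kf[of x k] cov by blast
    ultimately show "s \<le> fst (I i) \<and> fst (I i) < snd (I i) \<and> snd (I i) \<le> t \<and> {fst (I i)..snd (I i)} \<subseteq> V"
      using kf[of x k] xk by (auto simp: g_def)
  next
    fix i j assume "i \<in> PO" "j \<in> PO" "i \<noteq> j"
    then show "snd (I i) \<le> fst (I j) \<or> snd (I j) \<le> fst (I i)"
      using disj unfolding PO_def by auto
  qed
  have PU_bound: "ennreal (\<Sum>i\<in>PU. D i) \<le> (\<integral>\<^sup>+x\<in>{s..t}. w x \<partial>M)"
  proof -
    have "ennreal (\<Sum>i\<in>PU. D i) = (\<Sum>i\<in>PU. ennreal (D i))"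
      by (simp add: D_def)
    also have "\<dots> \<le> (\<Sum>i\<in>PU. \<integral>\<^sup>+x\<in>{fst (I i)..snd (I i)}. w x \<partial>M)"
    proof (rule sum_mono)
      fix i assume i: "i \<in> PU"
      obtain x k where xk: "i = (x,k)" by fastforce
      have "(x,k) \<in> p" "x \<in> U" "fst (I i) < snd (I i)" using i xk PU_def by auto
      then show "ennreal (D i) \<le> (\<integral>\<^sup>+x\<in>{fst (I i)..snd (I i)}. w x \<partial>M)"
        unfolding D_def using kf[of x k] xk by (intro UG) (auto simp: g_def)
    qed
    also have "\<dots> \<le> (\<integral>\<^sup>+x\<in>{s..t}. w x \<partial>M)"
    proof (rule sum_nn_integral_intervals_le[OF sets atom _ _ _ w])
      show "finite PU" using fin unfolding PU_def by auto
      show "\<And>i j. i \<in> PU \<Longrightarrow> j \<in> PU \<Longrightarrow> i \<noteq> j \<Longrightarrow> snd (I i) \<le> fst (I j) \<or> snd (I j) \<le> fst (I i)"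
        using disj unfolding PU_def by auto
      show "\<And>i. i \<in> PU \<Longrightarrow> {fst (I i)..snd (I i)} \<subseteq> {s..t}"
        using kf unfolding PU_def by fastforce
    qed
    finally show ?thesis .
  qed
  have "ennreal \<bar>u t - u s\<bar> \<le> ennreal ((\<Sum>i\<in>PU. D i) + (\<Sum>i\<in>PO. D i))"
    using main by (rule ennreal_leI)
  also have "\<dots> = ennreal (\<Sum>i\<in>PU. D i) + ennreal (\<Sum>i\<in>PO. D i)"
    by (rule ennreal_plus) (auto simp: D_def intro!: sum_nonneg)
  also have "\<dots> \<le> (\<integral>\<^sup>+x\<in>{s..t}. w x \<partial>M) + ennreal e"
    using PU_bound PO_small by (intro add_mono ennreal_leI) auto
  finally show ?thesis .
qed

lemma set_nn_integral_mono_set: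
  fixes M :: "real measure"
  assumes "A \<subseteq> B"
  shows "(\<integral>\<^sup>+x\<in>A. w x \<partial>M) \<le> (\<integral>\<^sup>+x\<in>B. w x \<partial>M)"
  using assms by (intro nn_integral_mono) (auto simp: indicator_def)

lemma piece_open:
  fixes u :: "real \<Rightarrow> real" and M :: "real measure" and w :: "real \<Rightarrow> ennreal" and U V :: "real set"
  assumes sets: "sets M = sets borel" and atom: "\<And>x. emeasure M {x} = 0"
    and w: "w \<in> borel_measurable borel"
    and UV: "open U" "open V" and st: "a \<le> s" "s \<le> t" "t \<le> b" and cov: "{s<..<t} \<subseteq> U \<union> V"
    and cont: "continuous_on {a..b} u"
    and UG: "\<And>c d. a \<le> c \<Longrightarrow> c < d \<Longrightarrow> d \<le> b \<Longrightarrow> {c..d} \<subseteq> U \<Longrightarrow>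
               ennreal \<bar>u d - u c\<bar> \<le> (\<integral>\<^sup>+x\<in>{c..d}. w x \<partial>M)"
    and AC: "\<And>(P :: (real \<times> real set) set) I. finite P \<Longrightarrow>
        (\<And>i. i\<in>P \<Longrightarrow> a \<le> fst (I i) \<and> fst (I i) < snd (I i) \<and> snd (I i) \<le> b \<and> {fst (I i)..snd (I i)} \<subseteq> V) \<Longrightarrow>
        (\<And>i j. i\<in>P \<Longrightarrow> j\<in>P \<Longrightarrow> i \<noteq> j \<Longrightarrow> snd (I i) \<le> fst (I j) \<or> snd (I j) \<le> fst (I i)) \<Longrightarrow>
        (\<Sum>i\<in>P. \<bar>u (snd (I i)) - u (fst (I i))\<bar>) < e"
    and e: "0 < e"
  shows "ennreal \<bar>u t - u s\<bar> \<le> (\<integral>\<^sup>+x\<in>{s..t}. w x \<partial>M) + ennreal e"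
proof (cases "s = t \<or> (\<integral>\<^sup>+x\<in>{s..t}. w x \<partial>M) = \<infinity>")
  case True
  then show ?thesis by auto
next
  case False
  then have st': "s < t" and fin: "(\<integral>\<^sup>+x\<in>{s..t}. w x \<partial>M) \<noteq> \<infinity>" using st by auto
  define W where "W = enn2real (\<integral>\<^sup>+x\<in>{s..t}. w x \<partial>M)"
  have W: "(\<integral>\<^sup>+x\<in>{s..t}. w x \<partial>M) = ennreal W" "0 \<le> W"
    using fin by (auto simp: W_def ennreal_enn2real_if)
  have bnd: "\<bar>u y - u x\<bar> \<le> W + e" if xy: "s < x" "x \<le> y" "y < t" for x y
  proof -
    have "ennreal \<bar>u y - u x\<bar> \<le> (\<integral>\<^sup>+z\<in>{x..y}. w z \<partial>M) + ennreal e"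
    proof (rule piece[OF sets atom w UV])
      show "x \<le> y" by fact
      show "{x..y} \<subseteq> U \<union> V"
      proof
        fix z assume "z \<in> {x..y}"
        then have "z \<in> {s<..<t}" using xy by auto
        then show "z \<in> U \<union> V" using cov by blast
      qed
      show "ennreal \<bar>u d - u c\<bar> \<le> (\<integral>\<^sup>+x\<in>{c..d}. w x \<partial>M)"
        if "x \<le> c" "c < d" "d \<le> y" "{c..d} \<subseteq> U" for c d
        using that xy st by (intro UG) auto
      show "(\<Sum>i\<in>P. \<bar>u (snd (I i)) - u (fst (I i))\<bar>) < e"
        if "finite P"
          "\<And>i. i\<in>P \<Longrightarrow> x \<le> fst (I i) \<and> fst (I i) < snd (I i) \<and> snd (I i) \<le> y \<and> {fst (I i)..snd (I i)} \<subseteq> V"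
          "\<And>i j. i\<in>P \<Longrightarrow> j\<in>P \<Longrightarrow> i \<noteq> j \<Longrightarrow> snd (I i) \<le> fst (I j) \<or> snd (I j) \<le> fst (I i)"
        for P :: "(real \<times> real set) set" and I
      proof (rule AC[OF that(1)])
        fix i assume i: "i \<in> P"
        have "x \<le> fst (I i) \<and> fst (I i) < snd (I i) \<and> snd (I i) \<le> y \<and> {fst (I i)..snd (I i)} \<subseteq> V"
          using that(2)[OF i] .
        then show "a \<le> fst (I i) \<and> fst (I i) < snd (I i) \<and> snd (I i) \<le> b \<and> {fst (I i)..snd (I i)} \<subseteq> V"
          using xy st by linarith
      next
        fix i j assume "i \<in> P" "j \<in> P" "i \<noteq> j"
        then show "snd (I i) \<le> fst (I j) \<or> snd (I j) \<le> fst (I i)" using that(3) by blast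
      qed
    qed
    also have "\<dots> \<le> (\<integral>\<^sup>+z\<in>{s..t}. w z \<partial>M) + ennreal e"
      using xy by (intro add_mono set_nn_integral_mono_set) auto
    also have "\<dots> = ennreal (W + e)" using W e by simp
    finally have h: "ennreal \<bar>u y - u x\<bar> \<le> ennreal (W + e)" .
    show ?thesis using h W(2) e by (simp del: ennreal_plus add: ennreal_le_iff)
  qed
  define xs where "xs n = s + (t - s) / (2 * (real n + 2))" for n :: nat
  define ys where "ys n = t - (t - s) / (2 * (real n + 2))" for n :: nat
  have xsl: "s < xs n" "xs n < t" "xs n \<le> ys n" "ys n < t" "s < ys n" for n
  proof -
    define q where "q = (t - s) / (2 * (real n + 2))"
    have q1: "0 < q" using st' by (auto simp: q_def)
    have q2: "q \<le> (t - s) / 4"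
      unfolding q_def using st' by (intro divide_left_mono) auto
    have e: "xs n = s + q" "ys n = t - q" by (simp_all add: xs_def ys_def q_def)
    show "s < xs n" "xs n < t" "xs n \<le> ys n" "ys n < t" "s < ys n"
      unfolding e using q1 q2 st' by auto
  qed
  have lim0: "(\<lambda>n. (t - s) / (2 * (real n + 2))) \<longlonglongrightarrow> 0"
  proof -
    have "(\<lambda>n. inverse (real (Suc (Suc n)))) \<longlonglongrightarrow> 0"
      using LIMSEQ_Suc[OF LIMSEQ_inverse_real_of_nat] .
    moreover have "\<And>n. inverse (real (Suc (Suc n))) = inverse (real n + 2)" by simp
    ultimately have i0: "(\<lambda>n. inverse (real n + 2)) \<longlonglongrightarrow> 0" by (simp add: add.commute)
    have "(\<lambda>n. (t - s) / 2 * inverse (real n + 2)) \<longlonglongrightarrow> (t - s) / 2 * 0"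
      by (intro tendsto_intros i0)
    then show ?thesis by (simp add: field_simps)
  qed
  have xlim: "xs \<longlonglongrightarrow> s"
    unfolding xs_def using tendsto_add[OF tendsto_const lim0, of s] by simp
  have ylim: "ys \<longlonglongrightarrow> t"
    unfolding ys_def using tendsto_diff[OF tendsto_const lim0, of t] by simp
  have xab: "xs n \<in> {a..b}" "ys n \<in> {a..b}" for n
  proof -
    have "s < xs n" "xs n < t" "s < ys n" "ys n < t" using xsl by auto
    then show "xs n \<in> {a..b}" "ys n \<in> {a..b}" using st by auto
  qed
  have ux: "(\<lambda>n. u (xs n)) \<longlonglongrightarrow> u s"
    by (rule continuous_on_tendsto_compose[OF cont xlim]) (use st xab in \<open>auto intro!: always_eventually\<close>)
  have uy: "(\<lambda>n. u (ys n)) \<longlonglongrightarrow> u t"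
    by (rule continuous_on_tendsto_compose[OF cont ylim]) (use st xab in \<open>auto intro!: always_eventually\<close>)
  have "(\<lambda>n. \<bar>u (ys n) - u (xs n)\<bar>) \<longlonglongrightarrow> \<bar>u t - u s\<bar>"
    by (intro tendsto_intros uy ux)
  then have "\<bar>u t - u s\<bar> \<le> W + e"
    by (rule LIMSEQ_le_const2) (use bnd xsl in auto)
  then have "ennreal \<bar>u t - u s\<bar> \<le> ennreal (W + e)" by (rule ennreal_leI)
  then show ?thesis using W e by simp
qed

lemma core:
  fixes u :: "real \<Rightarrow> real" and M :: "real measure" and w :: "real \<Rightarrow> ennreal" and U V :: "real set"
  assumes sets: "sets M = sets borel" and atom: "\<And>x. emeasure M {x} = 0"
    and w: "w \<in> borel_measurable borel"
    and UV: "open U" "open V" and ab: "a \<le> b"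
    and cont: "continuous_on {a..b} u"
    and zero: "\<And>t. t \<in> {a..b} \<Longrightarrow> t \<notin> U \<Longrightarrow> t \<notin> V \<Longrightarrow> u t = 0"
    and UG: "\<And>c d. a \<le> c \<Longrightarrow> c < d \<Longrightarrow> d \<le> b \<Longrightarrow> {c..d} \<subseteq> U \<Longrightarrow>
               ennreal \<bar>u d - u c\<bar> \<le> (\<integral>\<^sup>+x\<in>{c..d}. w x \<partial>M)"
    and AC: "\<And>(P :: (real \<times> real set) set) I. finite P \<Longrightarrow>
        (\<And>i. i\<in>P \<Longrightarrow> a \<le> fst (I i) \<and> fst (I i) < snd (I i) \<and> snd (I i) \<le> b \<and> {fst (I i)..snd (I i)} \<subseteq> V) \<Longrightarrow>
        (\<And>i j. i\<in>P \<Longrightarrow> j\<in>P \<Longrightarrow> i \<noteq> j \<Longrightarrow> snd (I i) \<le> fst (I j) \<or> snd (I j) \<le> fst (I i)) \<Longrightarrow>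
        (\<Sum>i\<in>P. \<bar>u (snd (I i)) - u (fst (I i))\<bar>) < e"
    and e: "0 < e"
  shows "ennreal \<bar>u b - u a\<bar> \<le> (\<integral>\<^sup>+x\<in>{a..b}. w x \<partial>M) + 2 * ennreal e"
proof -
  note po = piece_open[OF sets atom w UV _ _ _ _ cont UG AC e]
  define G where "G = {a..b} - (U \<union> V)"
  have Gc: "closed G" unfolding G_def using UV by (intro closed_Diff) auto
  have Gb: "bdd_below G" "bdd_above G" unfolding G_def by auto
  show ?thesis
  proof (cases "G = {}")
    case True
    then have h: "{a..b} \<subseteq> U \<union> V" unfolding G_def by blast
    have "{a<..<b} \<subseteq> {a..b}" by auto
    then have "{a<..<b} \<subseteq> U \<union> V" using h by (rule subset_trans)
    then have "ennreal \<bar>u b - u a\<bar> \<le> (\<integral>\<^sup>+x\<in>{a..b}. w x \<partial>M) + ennreal e"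
      using ab by (intro po) auto
    also have "\<dots> \<le> (\<integral>\<^sup>+x\<in>{a..b}. w x \<partial>M) + 2 * ennreal e"
      by (intro add_mono) (auto simp: mult_2)
    finally show ?thesis .
  next
    case False
    define g1 where "g1 = Inf G"
    define g2 where "g2 = Sup G"
    have g1G: "g1 \<in> G" unfolding g1_def using closed_contains_Inf[OF False Gb(1) Gc] .
    have g2G: "g2 \<in> G" unfolding g2_def using closed_contains_Sup[OF False Gb(2) Gc] .
    have g12: "g1 \<le> g2" unfolding g1_def g2_def using False Gb by (meson cInf_le_cSup)
    have g1ab: "a \<le> g1" "g1 \<le> b" using g1G G_def by auto
    have g2ab: "a \<le> g2" "g2 \<le> b" using g2G G_def by auto
    have u1: "u g1 = 0" using g1G zero unfolding G_def by auto
    have u2: "u g2 = 0" using g2G zero unfolding G_def by auto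
    have cov1: "{a<..<g1} \<subseteq> U \<union> V"
    proof
      fix x assume x: "x \<in> {a<..<g1}"
      have "x \<notin> G"
      proof
        assume "x \<in> G"
        then have "g1 \<le> x" unfolding g1_def using Gb(1) by (rule cInf_lower)
        then show False using x by auto
      qed
      then show "x \<in> U \<union> V" using x g1ab unfolding G_def by auto
    qed
    have cov2: "{g2<..<b} \<subseteq> U \<union> V"
    proof
      fix x assume x: "x \<in> {g2<..<b}"
      have "x \<notin> G"
      proof
        assume "x \<in> G"
        then have "x \<le> g2" unfolding g2_def using Gb(2) by (rule cSup_upper)
        then show False using x by auto
      qed
      then show "x \<in> U \<union> V" using x g2ab unfolding G_def by auto
    qed
    have p1: "ennreal \<bar>u g1 - u a\<bar> \<le> (\<integral>\<^sup>+x\<in>{a..g1}. w x \<partial>M) + ennreal e"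
      using g1ab cov1 by (intro po) auto
    have p2: "ennreal \<bar>u b - u g2\<bar> \<le> (\<integral>\<^sup>+x\<in>{g2..b}. w x \<partial>M) + ennreal e"
      using g2ab cov2 by (intro po) auto
    define I where "I = (\<lambda>i::bool. if i then (a, g1) else (g2, b))"
    have sum2: "(\<Sum>i\<in>UNIV. \<integral>\<^sup>+x\<in>{fst (I i)..snd (I i)}. w x \<partial>M) \<le> (\<integral>\<^sup>+x\<in>{a..b}. w x \<partial>M)"
      by (rule sum_nn_integral_intervals_le[OF sets atom _ _ _ w])
         (use g12 g1ab g2ab in \<open>auto simp: I_def\<close>)
    have sum2': "(\<integral>\<^sup>+x\<in>{a..g1}. w x \<partial>M) + (\<integral>\<^sup>+x\<in>{g2..b}. w x \<partial>M) \<le> (\<integral>\<^sup>+x\<in>{a..b}. w x \<partial>M)"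
      using sum2 by (simp add: UNIV_bool I_def add.commute)
    have "\<bar>u b - u a\<bar> \<le> \<bar>u g1 - u a\<bar> + \<bar>u b - u g2\<bar>" using u1 u2 by linarith
    then have "ennreal \<bar>u b - u a\<bar> \<le> ennreal \<bar>u g1 - u a\<bar> + ennreal \<bar>u b - u g2\<bar>"
      by (metis abs_ge_zero ennreal_leI ennreal_plus)
    also have "\<dots> \<le> ((\<integral>\<^sup>+x\<in>{a..g1}. w x \<partial>M) + ennreal e) + ((\<integral>\<^sup>+x\<in>{g2..b}. w x \<partial>M) + ennreal e)"
      using p1 p2 by (rule add_mono)
    also have "\<dots> = ((\<integral>\<^sup>+x\<in>{a..g1}. w x \<partial>M) + (\<integral>\<^sup>+x\<in>{g2..b}. w x \<partial>M)) + 2 * ennreal e"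
      by (simp only: mult_2 add.assoc add.left_commute add.commute)
    also have "\<dots> \<le> (\<integral>\<^sup>+x\<in>{a..b}. w x \<partial>M) + 2 * ennreal e"
      using sum2' by (rule add_mono) simp
    finally show ?thesis .
  qed
qed

lemma path_measure:
  fixes \<mu> :: "'a::metric_space measure" and g :: "real \<Rightarrow> 'a"
  assumes mu_borel: "sets \<mu> = sets borel"
    and ab: "a \<le> b" and cont: "continuous_on {a..b} g" and inj: "inj_on g {a..b}"
  obtains M1 :: "real measure" where "sets M1 = sets borel"
    "\<And>A. A \<in> sets borel \<Longrightarrow> emeasure M1 A = emeasure \<mu> (g ` (A \<inter> {a..b}))"
    "\<And>w' c d. w' \<in> borel_measurable borel \<Longrightarrow> a \<le> c \<Longrightarrow> d \<le> b \<Longrightarrow>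
        (\<integral>\<^sup>+x\<in>g`{c..d}. w' x \<partial>\<mu>) = (\<integral>\<^sup>+t\<in>{c..d}. w' (g (max a (min b t))) \<partial>M1)"
proof -
  define Im where "Im = g ` {a..b}"
  define \<psi> where "\<psi> = inv_into {a..b} g"
  have spaceM: "space \<mu> = UNIV" using sets_eq_imp_space_eq[OF mu_borel] by simp
  have Imc: "compact Im" unfolding Im_def using cont by (intro compact_continuous_image) auto
  then have Ims: "Im \<in> sets \<mu>" using mu_borel by (simp add: compact_imp_closed)
  have psig: "\<psi> (g t) = t" if "t \<in> {a..b}" for t
    unfolding \<psi>_def using inj that by (simp add: inv_into_f_f)
  have gpsi: "g (\<psi> x) = x" "\<psi> x \<in> {a..b}" if "x \<in> Im" for x
    using that psig unfolding Im_def by auto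
  have psic: "continuous_on Im \<psi>"
    unfolding Im_def using psig by (intro continuous_on_inv[OF cont]) auto
  have psim: "\<psi> \<in> measurable (restrict_space \<mu> Im) borel"
  proof -
    have h: "\<psi> \<in> borel_measurable (restrict_space borel Im)"
      by (rule borel_measurable_continuous_on_restrict[OF psic])
    have s: "sets (restrict_space \<mu> Im) = sets (restrict_space borel Im)"
      by (rule sets_restrict_space_cong[OF mu_borel])
    show ?thesis using h by (subst measurable_cong_sets[OF s refl])
  qed
  define M1 where "M1 = distr (restrict_space \<mu> Im) borel \<psi>"
  have sM1: "sets M1 = sets borel" unfolding M1_def by simp
  have spR: "space (restrict_space \<mu> Im) = Im" by (simp add: space_restrict_space spaceM)
  have pre: "\<psi> -` A \<inter> Im = g ` (A \<inter> {a..b})" for A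
  proof
    show "\<psi> -` A \<inter> Im \<subseteq> g ` (A \<inter> {a..b})"
    proof
      fix x assume "x \<in> \<psi> -` A \<inter> Im"
      then show "x \<in> g ` (A \<inter> {a..b})" using gpsi[of x] by (auto intro!: image_eqI[of x g "\<psi> x"])
    qed
    show "g ` (A \<inter> {a..b}) \<subseteq> \<psi> -` A \<inter> Im"
      using psig unfolding Im_def by auto
  qed
  have em: "emeasure M1 A = emeasure \<mu> (g ` (A \<inter> {a..b}))" if A: "A \<in> sets borel" for A
  proof -
    have "emeasure M1 A = emeasure (restrict_space \<mu> Im) (\<psi> -` A \<inter> Im)"
      unfolding M1_def using emeasure_distr[OF psim, of A] A spR by simp
    also have "\<dots> = emeasure \<mu> (\<psi> -` A \<inter> Im)"
      by (rule emeasure_restrict_space) (use Ims spaceM in auto)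
    finally show ?thesis by (simp add: pre)
  qed
  have tr: "(\<integral>\<^sup>+x\<in>g`{c..d}. w' x \<partial>\<mu>) = (\<integral>\<^sup>+t\<in>{c..d}. w' (g (max a (min b t))) \<partial>M1)"
    if w': "w' \<in> borel_measurable borel" and cd: "a \<le> c" "d \<le> b" for w' c d
  proof -
    define gc where "gc t = g (max a (min b t))" for t
    have gcc: "continuous_on UNIV gc"
    proof -
      have "continuous_on UNIV (\<lambda>t::real. max a (min b t))" by (intro continuous_intros)
      moreover have "(\<lambda>t::real. max a (min b t)) ` UNIV \<subseteq> {a..b}" using ab by auto
      ultimately show ?thesis unfolding gc_def
        by (intro continuous_on_compose2[OF cont]) auto
    qed
    have gcm: "gc \<in> borel_measurable borel" by (rule borel_measurable_continuous_onI[OF gcc])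
    have wgm: "(\<lambda>t. w' (gc t) * indicator {c..d} t) \<in> borel_measurable borel"
      using w' gcm by measurable
    have "(\<integral>\<^sup>+t\<in>{c..d}. w' (gc t) \<partial>M1) = (\<integral>\<^sup>+x. w' (gc (\<psi> x)) * indicator {c..d} (\<psi> x) \<partial>restrict_space \<mu> Im)"
      unfolding M1_def by (rule nn_integral_distr[OF psim]) (use wgm in simp)
    also have "\<dots> = (\<integral>\<^sup>+x. w' (gc (\<psi> x)) * indicator {c..d} (\<psi> x) * indicator Im x \<partial>\<mu>)"
      by (rule nn_integral_restrict_space) (use Ims spaceM in auto)
    also have "\<dots> = (\<integral>\<^sup>+x\<in>g`{c..d}. w' x \<partial>\<mu>)"
    proof (rule nn_integral_cong)
      fix x
      show "w' (gc (\<psi> x)) * indicator {c..d} (\<psi> x) * indicator Im x = w' x * indicator (g ` {c..d}) x"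
      proof (cases "x \<in> Im")
        case True
        have e1: "gc (\<psi> x) = x" using gpsi[OF True] unfolding gc_def by auto
        have "\<psi> x \<in> {c..d} \<longleftrightarrow> x \<in> g ` {c..d}"
        proof
          assume "\<psi> x \<in> {c..d}" then show "x \<in> g ` {c..d}" using gpsi[OF True] by (metis image_eqI)
        next
          assume "x \<in> g ` {c..d}"
          then obtain t where "t \<in> {c..d}" "x = g t" by auto
          then show "\<psi> x \<in> {c..d}" using psig[of t] cd by auto
        qed
        then show ?thesis using True e1 by (auto simp: indicator_def)
      next
        case False
        then have "x \<notin> g ` {c..d}" using cd unfolding Im_def by auto
        then show ?thesis using False by (simp add: indicator_def)
      qed
    qed
    finally show ?thesis unfolding gc_def ..
  qed
  show ?thesis using that[OF sM1 em tr] by blast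
qed

lemma abs_cont_on_cont:
  assumes "abs_cont_on c d v"
  shows "continuous_on {c..d} v"
  unfolding continuous_on_iff
proof (intro ballI allI impI)
  fix x e :: real assume x: "x \<in> {c..d}" and e: "0 < e"
  obtain \<delta> where \<delta>: "\<delta> > 0" and H: "\<forall>(n::nat) (I::nat \<Rightarrow> real \<times> real).
      (\<forall>i<n. c \<le> fst (I i) \<and> fst (I i) \<le> snd (I i) \<and> snd (I i) \<le> d) \<and>
      (\<forall>i<n. \<forall>j<n. i \<noteq> j \<longrightarrow> snd (I i) \<le> fst (I j) \<or> snd (I j) \<le> fst (I i)) \<and>
      (\<Sum>i<n. snd (I i) - fst (I i)) < \<delta> \<longrightarrow>
      (\<Sum>i<n. \<bar>v (snd (I i)) - v (fst (I i))\<bar>) < e"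
    using assms[unfolded abs_cont_on_def, rule_format, OF e] by blast
  show "\<exists>r>0. \<forall>x'\<in>{c..d}. dist x' x < r \<longrightarrow> dist (v x') (v x) < e"
  proof (intro exI[of _ \<delta>] conjI ballI impI)
    fix y assume y: "y \<in> {c..d}" "dist y x < \<delta>"
    have "(\<Sum>i<(1::nat). \<bar>v (snd ((\<lambda>_. (min x y, max x y)) i)) - v (fst ((\<lambda>_. (min x y, max x y)) i))\<bar>) < e"
      by (rule H[rule_format]) (use x y in \<open>auto simp: dist_real_def\<close>)
    then show "dist (v y) (v x) < e"
      by (cases "x \<le> y") (auto simp: dist_real_def min_def max_def abs_minus_commute)
  qed (use \<delta> in auto)
qed

lemma path_ineq:
  fixes \<mu> :: "'a::metric_space measure" and \<gamma> :: "'a cpath" and f :: "'a \<Rightarrow> real" and \<rho>' :: "'a \<Rightarrow> ennreal"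
  assumes mu_borel: "sets \<mu> = sets borel" and atom: "\<And>x. emeasure \<mu> {x} = 0"
    and G: "\<gamma> \<in> Gamma_mu \<mu>"
    and rho: "\<rho>' \<in> borel_measurable borel"
    and F: "closed F"
    and N: "N \<in> sets borel" "emeasure \<mu> (pIm \<gamma> \<inter> N) = 0"
    and fz: "\<And>x. x \<in> F \<Longrightarrow> x \<notin> N \<Longrightarrow> f x = 0"
    and UGs: "\<And>c d. pa \<gamma> \<le> c \<Longrightarrow> c < d \<Longrightarrow> d \<le> pb \<gamma> \<Longrightarrow> pf \<gamma> ` {c..d} \<inter> F = {} \<Longrightarrow>
        ennreal \<bar>f (pf \<gamma> c) - f (pf \<gamma> d)\<bar> \<le> (\<integral>\<^sup>+x\<in>pf \<gamma> ` {c..d}. \<rho>' x \<partial>\<mu>)"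
    and AC: "abs_cont_on 0 (hlen \<mu> \<gamma>) (f \<circ> gamma_h \<mu> \<gamma>)"
  shows "ennreal \<bar>f (pf \<gamma> (pa \<gamma>)) - f (pf \<gamma> (pb \<gamma>))\<bar> \<le> line_int \<mu> \<gamma> \<rho>'"
proof -
  define a where "a = pa \<gamma>"
  define b where "b = pb \<gamma>"
  define g where "g = pf \<gamma>"
  have Gm: "is_cpath \<gamma> \<and> pa \<gamma> < pb \<gamma> \<and> inj_on (pf \<gamma>) {pa \<gamma>..pb \<gamma>} \<and>
      (\<forall>c d. pa \<gamma> \<le> c \<and> c < d \<and> d \<le> pb \<gamma> \<longrightarrow>
          0 < emeasure \<mu> (pf \<gamma> ` {c..d}) \<and> emeasure \<mu> (pf \<gamma> ` {c..d}) < \<infinity>)"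
    using G unfolding Gamma_mu_def by (rule CollectD)
  have ab: "a < b" using Gm unfolding a_def b_def by (rule conjunct1[OF conjunct2])
  have cont: "continuous_on {a..b} g"
    using Gm unfolding a_def b_def g_def is_cpath_def by (rule conjunct2[OF conjunct1])
  have inj: "inj_on g {a..b}" using Gm unfolding a_def b_def g_def by blast
  have posfin: "0 < emeasure \<mu> (g ` {c..d}) \<and> emeasure \<mu> (g ` {c..d}) < \<infinity>"
    if "a \<le> c" "c < d" "d \<le> b" for c d
    using Gm that unfolding a_def b_def g_def by blast
  obtain M1 where sM1: "sets M1 = sets borel"
    and emM1: "\<And>A. A \<in> sets borel \<Longrightarrow> emeasure M1 A = emeasure \<mu> (g ` (A \<inter> {a..b}))"
    and tr: "\<And>w' c d. w' \<in> borel_measurable borel \<Longrightarrow> a \<le> c \<Longrightarrow> d \<le> b \<Longrightarrow>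
        (\<integral>\<^sup>+x\<in>g`{c..d}. w' x \<partial>\<mu>) = (\<integral>\<^sup>+t\<in>{c..d}. w' (g (max a (min b t))) \<partial>M1)"
    by (rule path_measure[OF mu_borel less_imp_le[OF ab] cont inj]) blast
  define gc where "gc t = g (max a (min b t))" for t
  have gcc: "continuous_on UNIV gc"
  proof -
    have "continuous_on UNIV (\<lambda>t::real. max a (min b t))" by (intro continuous_intros)
    moreover have "(\<lambda>t::real. max a (min b t)) ` UNIV \<subseteq> {a..b}" using ab by auto
    ultimately show ?thesis unfolding gc_def
      by (intro continuous_on_compose2[OF cont]) auto
  qed
  have gcm: "gc \<in> borel_measurable borel" by (rule borel_measurable_continuous_onI[OF gcc])
  have gcg: "gc t = g t" if "t \<in> {a..b}" for t using that unfolding gc_def by auto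
  have spM1: "space M1 = UNIV" using sets_eq_imp_space_eq[OF sM1] by simp
  have finM1: "emeasure M1 (space M1) \<noteq> \<infinity>"
    using emM1[of UNIV] posfin[of a b] ab spM1 by auto
  interpret M1: finite_measure M1 by (rule finite_measureI[OF finM1])
  have atomM1: "emeasure M1 {x} = 0" for x
  proof (cases "x \<in> {a..b}")
    case True
    then have "g ` ({x} \<inter> {a..b}) = {g x}" by auto
    then show ?thesis using emM1[of "{x}"] atom by simp
  next
    case False
    then show ?thesis using emM1[of "{x}"] by simp
  qed
  have mM1: "measure M1 A = measure \<mu> (g ` (A \<inter> {a..b}))" if "A \<in> sets borel" for A
    using emM1[OF that] by (simp add: measure_def)
  define \<nu> where "\<nu> t = measure \<mu> (g ` {a..t})" for t
  have nu_eq: "nu_path \<mu> \<gamma> = \<nu>" unfolding nu_path_def \<nu>_def a_def g_def by auto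
  have nuM1: "\<nu> t = measure M1 {a..t}" if "t \<le> b" for t
    using mM1[of "{a..t}"] that unfolding \<nu>_def by (simp add: Int_absorb2)
  have nudiff: "\<nu> d - \<nu> c = measure M1 {c..d}" if "a \<le> c" "c \<le> d" "d \<le> b" for c d
  proof -
    have "measure M1 {a..d} = measure M1 ({a..c} \<union> {c<..d})"
      using that by (intro arg_cong[where f="measure M1"]) auto
    also have "\<dots> = measure M1 {a..c} + measure M1 {c<..d}"
      by (rule M1.finite_measure_Union) (auto simp: sM1)
    finally have 1: "measure M1 {a..d} = measure M1 {a..c} + measure M1 {c<..d}" .
    have "measure M1 {c..d} = measure M1 ({c} \<union> {c<..d})"
      using that by (intro arg_cong[where f="measure M1"]) auto
    also have "\<dots> = measure M1 {c} + measure M1 {c<..d}"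
      by (rule M1.finite_measure_Union) (auto simp: sM1)
    also have "measure M1 {c} = 0" using atomM1[of c] by (simp add: measure_def)
    finally have 2: "measure M1 {c..d} = measure M1 {c<..d}" by simp
    show ?thesis using 1 2 nuM1[of c] nuM1[of d] that by simp
  qed
  have nupos: "\<nu> c < \<nu> d" if "a \<le> c" "c < d" "d \<le> b" for c d
  proof -
    have "0 < emeasure M1 {c..d}"
      using emM1[of "{c..d}"] posfin[OF that] that by (simp add: Int_absorb2)
    then have "0 < measure M1 {c..d}" using M1.emeasure_eq_measure by simp
    then show ?thesis using nudiff[of c d] that by simp
  qed
  have numono: "\<nu> c \<le> \<nu> d" if "a \<le> c" "c \<le> d" "d \<le> b" for c d
    using nudiff[OF that] measure_nonneg[of M1 "{c..d}"] by linarith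
  have nua: "\<nu> a = 0" unfolding \<nu>_def using atom[of "g a"] by (simp add: measure_def)
  have nub: "\<nu> b = hlen \<mu> \<gamma>" unfolding \<nu>_def hlen_def pIm_def a_def b_def g_def ..
  have injnu: "inj_on \<nu> {a..b}"
  proof (rule inj_onI)
    fix x y assume "x \<in> {a..b}" "y \<in> {a..b}" "\<nu> x = \<nu> y"
    then show "x = y" using nupos[of x y] nupos[of y x] by (cases x y rule: linorder_cases) auto
  qed
  have nurange: "\<nu> t \<in> {0..hlen \<mu> \<gamma>}" if "t \<in> {a..b}" for t
    using numono[of a t] numono[of t b] that nua nub by auto
  have nucont: "continuous_on {a..b} \<nu>"
  proof -
    interpret fbm: finite_borel_measure M1 by (unfold_locales) (rule sM1)
    have c: "isCont (cdf M1) x" for x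
      using fbm.isCont_cdf atomM1[of x] by (simp add: measure_def)
    have eq: "cdf M1 t = \<nu> t" if "t \<in> {a..b}" for t
    proof -
      have "cdf M1 t = measure M1 ({..<a} \<union> {a..t})"
        unfolding cdf_def using that by (intro arg_cong[where f="measure M1"]) auto
      also have "\<dots> = measure M1 {..<a} + measure M1 {a..t}"
        by (rule M1.finite_measure_Union) (auto simp: sM1)
      also have "{..<a} \<inter> {a..b} = {}" by auto
      then have "measure M1 {..<a} = 0" using mM1[of "{..<a}"] by simp
      finally show ?thesis using nuM1[of t] that by simp
    qed
    have "continuous_on {a..b} (cdf M1)" using c by (simp add: continuous_at_imp_continuous_on)
    then show ?thesis using eq by (rule continuous_on_eq) 
  qed
  define v where "v = f \<circ> gamma_h \<mu> \<gamma>"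
  have vcont: "continuous_on {0..hlen \<mu> \<gamma>} v" unfolding v_def by (rule abs_cont_on_cont[OF AC])
  have uv: "f (g t) = v (\<nu> t)" if "t \<in> {a..b}" for t
    unfolding v_def gamma_h_def nu_eq using inv_into_f_f[OF injnu that]
    by (simp add: a_def b_def g_def)
  have ucont: "continuous_on {a..b} (\<lambda>t. f (g t))"
  proof -
    have "continuous_on {a..b} (\<lambda>t. v (\<nu> t))"
      by (rule continuous_on_compose2[OF vcont nucont]) (use nurange in auto)
    then show ?thesis by (rule continuous_on_eq) (simp add: uv)
  qed
  define U where "U = gc -` (- F)"
  have Uo: "open U" unfolding U_def
    by (rule continuous_open_vimage) (use F gcc in \<open>auto simp: continuous_on_eq_continuous_at\<close>)
  define B where "B = {a..b} \<inter> gc -` N"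
  have Bb: "B \<in> sets borel" unfolding B_def using gcm N(1) by measurable
  have B0: "emeasure M1 B = 0"
  proof -
    have "g ` (B \<inter> {a..b}) = pIm \<gamma> \<inter> N"
      unfolding B_def pIm_def a_def[symmetric] b_def[symmetric] g_def[symmetric] using gcg by auto
    then show ?thesis using emM1[OF Bb] N(2) by simp
  qed
  define w where "w t = \<rho>' (gc t)" for t
  have wm: "w \<in> borel_measurable borel" unfolding w_def using rho gcm by measurable
  have li: "line_int \<mu> \<gamma> \<rho>' = (\<integral>\<^sup>+t\<in>{a..b}. w t \<partial>M1)"
    unfolding line_int_def pIm_def w_def gc_def using tr[OF rho, of a b]
    by (simp add: a_def b_def g_def)
  have "ennreal \<bar>f (g b) - f (g a)\<bar> \<le> line_int \<mu> \<gamma> \<rho>'"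
  proof (rule ennreal_le_epsilon)
    fix e :: real assume e: "0 < e"
    then have e2: "0 < e / 2" by simp
    obtain \<delta> where \<delta>: "\<delta> > 0" and H: "\<forall>(n::nat) (I::nat \<Rightarrow> real \<times> real).
      (\<forall>i<n. 0 \<le> fst (I i) \<and> fst (I i) \<le> snd (I i) \<and> snd (I i) \<le> hlen \<mu> \<gamma>) \<and>
      (\<forall>i<n. \<forall>j<n. i \<noteq> j \<longrightarrow> snd (I i) \<le> fst (I j) \<or> snd (I j) \<le> fst (I i)) \<and>
      (\<Sum>i<n. snd (I i) - fst (I i)) < \<delta> \<longrightarrow>
      (\<Sum>i<n. \<bar>v (snd (I i)) - v (fst (I i))\<bar>) < e / 2"
      using AC[unfolded abs_cont_on_def, rule_format, OF e2] unfolding v_def by blast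
    have "(INF U\<in>{U. B \<subseteq> U \<and> open U}. emeasure M1 U) < ennreal \<delta>"
      using outer_regular[OF sM1 finM1 Bb] B0 \<delta> by simp
    then obtain V where V: "B \<subseteq> V" "open V" "emeasure M1 V < ennreal \<delta>"
      by (auto simp: INF_less_iff)
    have Vs: "V \<in> sets M1" using V(2) sM1 by simp
    have core_res: "ennreal \<bar>f (g b) - f (g a)\<bar> \<le> (\<integral>\<^sup>+x\<in>{a..b}. w x \<partial>M1) + 2 * ennreal (e / 2)"
    proof (rule core[OF sM1 atomM1 wm Uo V(2) less_imp_le[OF ab] ucont _ _ _ e2])
      fix t assume t: "t \<in> {a..b}" "t \<notin> U" "t \<notin> V"
      then have "g t \<in> F" using gcg unfolding U_def by auto
      moreover have "g t \<notin> N" using t V(1) gcg unfolding B_def by auto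
      ultimately show "f (g t) = 0" by (rule fz)
    next
      fix c d assume cd: "a \<le> c" "c < d" "d \<le> b" "{c..d} \<subseteq> U"
      have "g ` {c..d} \<inter> F = {}"
      proof -
        { fix t assume t: "t \<in> {c..d}" "g t \<in> F"
          then have "t \<in> U" using cd by auto
          moreover have "gc t = g t" using t cd by (intro gcg) auto
          ultimately have False using t unfolding U_def by auto }
        then show ?thesis by blast
      qed
      then have "ennreal \<bar>f (g c) - f (g d)\<bar> \<le> (\<integral>\<^sup>+x\<in>g ` {c..d}. \<rho>' x \<partial>\<mu>)"
        using UGs[of c d] cd unfolding a_def b_def g_def by auto
      also have "\<dots> = (\<integral>\<^sup>+x\<in>{c..d}. w x \<partial>M1)"
        unfolding w_def gc_def using tr[OF rho, of c d] cd by simp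
      finally show "ennreal \<bar>f (g d) - f (g c)\<bar> \<le> (\<integral>\<^sup>+x\<in>{c..d}. w x \<partial>M1)"
        by (simp add: abs_minus_commute)
    next
      fix P :: "(real \<times> real set) set" and I
      assume P: "finite P"
        and Pi: "\<And>i. i\<in>P \<Longrightarrow> a \<le> fst (I i) \<and> fst (I i) < snd (I i) \<and> snd (I i) \<le> b \<and> {fst (I i)..snd (I i)} \<subseteq> V"
        and Pd: "\<And>i j. i\<in>P \<Longrightarrow> j\<in>P \<Longrightarrow> i \<noteq> j \<Longrightarrow> snd (I i) \<le> fst (I j) \<or> snd (I j) \<le> fst (I i)"
      obtain ee where ee: "bij_betw ee {0..<card P} P" using ex_bij_betw_nat_finite[OF P] by blast
      define n where "n = card P"
      define J where "J k = (\<nu> (fst (I (ee k))), \<nu> (snd (I (ee k))))" for k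
      have eeP: "ee k \<in> P" if "k < n" for k using ee that unfolding n_def bij_betw_def by auto
      have sumP: "(\<Sum>i\<in>P. h i) = (\<Sum>k<n. h (ee k))" for h :: "real \<times> real set \<Rightarrow> real"
        using sum.reindex_bij_betw[OF ee, of h] by (simp add: n_def atLeast0LessThan)
      have c1: "\<forall>k<n. 0 \<le> fst (J k) \<and> fst (J k) \<le> snd (J k) \<and> snd (J k) \<le> hlen \<mu> \<gamma>"
      proof (intro allI impI)
        fix k assume k: "k < n"
        have "a \<le> fst (I (ee k))" "fst (I (ee k)) < snd (I (ee k))" "snd (I (ee k)) \<le> b"
          using Pi[OF eeP[OF k]] by auto
        then show "0 \<le> fst (J k) \<and> fst (J k) \<le> snd (J k) \<and> snd (J k) \<le> hlen \<mu> \<gamma>"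
          unfolding J_def using nurange[of "fst (I (ee k))"] nurange[of "snd (I (ee k))"]
            numono[of "fst (I (ee k))" "snd (I (ee k))"] by auto
      qed
      have c2: "\<forall>k<n. \<forall>l<n. k \<noteq> l \<longrightarrow> snd (J k) \<le> fst (J l) \<or> snd (J l) \<le> fst (J k)"
      proof (intro allI impI)
        fix k l assume kl: "k < n" "l < n" "k \<noteq> l"
        have ne: "ee k \<noteq> ee l" using ee kl unfolding bij_betw_def inj_on_def n_def by auto
        have ik: "a \<le> fst (I (ee k))" "fst (I (ee k)) < snd (I (ee k))" "snd (I (ee k)) \<le> b"
          using Pi[OF eeP[OF kl(1)]] by auto
        have il: "a \<le> fst (I (ee l))" "fst (I (ee l)) < snd (I (ee l))" "snd (I (ee l)) \<le> b"
          using Pi[OF eeP[OF kl(2)]] by auto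
        show "snd (J k) \<le> fst (J l) \<or> snd (J l) \<le> fst (J k)"
          using Pd[OF eeP[OF kl(1)] eeP[OF kl(2)] ne] ik il unfolding J_def
          by (auto intro!: numono)
      qed
      have c3: "(\<Sum>k<n. snd (J k) - fst (J k)) < \<delta>"
      proof -
        have "(\<Sum>k<n. snd (J k) - fst (J k)) = (\<Sum>i\<in>P. measure M1 {fst (I i)..snd (I i)})"
          unfolding sumP J_def
        proof (intro sum.cong refl)
          fix k assume "k \<in> {..<n}"
          then have "a \<le> fst (I (ee k))" "fst (I (ee k)) < snd (I (ee k))" "snd (I (ee k)) \<le> b"
            using Pi[OF eeP] by auto
          then show "snd (\<nu> (fst (I (ee k))), \<nu> (snd (I (ee k)))) - fst (\<nu> (fst (I (ee k))), \<nu> (snd (I (ee k))))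
              = measure M1 {fst (I (ee k))..snd (I (ee k))}"
            using nudiff by simp
        qed
        also have "\<dots> \<le> measure M1 V"
        proof -
          have "(\<Sum>i\<in>P. \<integral>\<^sup>+x\<in>{fst (I i)..snd (I i)}. 1 \<partial>M1) \<le> (\<integral>\<^sup>+x\<in>V. 1 \<partial>M1)"
            by (rule sum_nn_integral_intervals_le[OF sM1 atomM1 P Pd]) (use Pi in auto)
          then have "(\<Sum>i\<in>P. emeasure M1 {fst (I i)..snd (I i)}) \<le> emeasure M1 V"
            using Vs by (simp add: sM1)
          then have "ennreal (\<Sum>i\<in>P. measure M1 {fst (I i)..snd (I i)}) \<le> ennreal (measure M1 V)"
            by (simp add: M1.emeasure_eq_measure)
          then show ?thesis by (simp add: ennreal_le_iff)
        qed
        also have "\<dots> < \<delta>"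
          using V(3) \<delta> by (simp add: M1.emeasure_eq_measure ennreal_less_iff)
        finally show ?thesis .
      qed
      have "(\<Sum>k<n. \<bar>v (snd (J k)) - v (fst (J k))\<bar>) < e / 2"
        using H c1 c2 c3 by blast
      moreover have "(\<Sum>k<n. \<bar>v (snd (J k)) - v (fst (J k))\<bar>) = (\<Sum>i\<in>P. \<bar>f (g (snd (I i))) - f (g (fst (I i)))\<bar>)"
        unfolding sumP J_def
      proof (intro sum.cong refl)
        fix k assume "k \<in> {..<n}"
        then have "a \<le> fst (I (ee k))" "fst (I (ee k)) < snd (I (ee k))" "snd (I (ee k)) \<le> b"
          using Pi[OF eeP] by auto
        then show "\<bar>v (snd (\<nu> (fst (I (ee k))), \<nu> (snd (I (ee k))))) - v (fst (\<nu> (fst (I (ee k))), \<nu> (snd (I (ee k)))))\<bar>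
           = \<bar>f (g (snd (I (ee k)))) - f (g (fst (I (ee k))))\<bar>"
          using uv by simp
      qed
      ultimately show "(\<Sum>i\<in>P. \<bar>f (g (snd (I i))) - f (g (fst (I i)))\<bar>) < e / 2" by simp
    qed
    also have "\<dots> = line_int \<mu> \<gamma> \<rho>' + ennreal e"
    proof -
      have "ennreal e = ennreal (e/2) + ennreal (e/2)" using e ennreal_plus[of "e/2" "e/2"] by simp
      then have "2 * ennreal (e / 2) = ennreal e" by (simp add: mult_2)
      then show ?thesis using li by simp
    qed
    finally show "ennreal \<bar>f (g b) - f (g a)\<bar> \<le> line_int \<mu> \<gamma> \<rho>' + ennreal e" .
  qed
  then show ?thesis unfolding a_def b_def g_def by (simp add: abs_minus_commute)
qed

theorem lemma5p1:
  fixes \<mu> m :: "'a::metric_space measure"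
    and p :: real
    and \<Gamma>s :: "'a cpath set"
    and F :: "'a set"
    and f :: "'a \<Rightarrow> real"
    and \<rho> :: "'a \<Rightarrow> ennreal"
  assumes mu_borel: "sets \<mu> = sets borel"
    and mu_nonatomic: "\<And>x. emeasure \<mu> {x} = 0"
    and m_borel: "sets m = sets borel"
    and p_pos: "0 < p"
    and Gs_sub: "\<Gamma>s \<subseteq> Gamma_mu \<mu>"
    and Gs_subpaths: "\<And>\<gamma> c d. \<gamma> \<in> \<Gamma>s \<Longrightarrow> pa \<gamma> \<le> c \<Longrightarrow> c < d \<Longrightarrow> d \<le> pb \<gamma> \<Longrightarrow>
                         \<exists>\<delta>\<in>\<Gamma>s. is_restriction \<gamma> c d \<delta>"
    and Gs_connects: "\<And>x y. x \<noteq> y \<Longrightarrow> \<exists>\<gamma>\<in>\<Gamma>s. pf \<gamma> (pa \<gamma>) = x \<and> pf \<gamma> (pb \<gamma>) = y"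
    and F_closed: "closed F"
    and f_ACC: "ACC_p p m \<mu> \<Gamma>s f"
    and f_zero: "AE x in m. x \<in> F \<longrightarrow> f x = 0"
    and rho_ug: "upper_gradient \<mu> \<Gamma>s f \<rho>"
  shows "weak_upper_gradient p m \<mu> \<Gamma>s f (\<lambda>x. if x \<in> F then 0 else \<rho> x)"
proof -
  define \<rho>' where "\<rho>' = (\<lambda>x. if x \<in> F then 0 else \<rho> x)"
  have rhom: "\<rho> \<in> borel_measurable borel" using rho_ug unfolding upper_gradient_def by blast
  have Fb: "F \<in> sets borel" using F_closed by simp
  have rho'm: "\<rho>' \<in> borel_measurable borel"
    unfolding \<rho>'_def by (rule measurable_If_set) (use rhom Fb in auto)
  obtain \<Gamma>1 where G1: "\<Gamma>1 \<subseteq> \<Gamma>s" "Modp p m \<mu> \<Gamma>1 = 0"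
    and G1ac: "\<And>\<gamma>. \<gamma> \<in> \<Gamma>s - \<Gamma>1 \<Longrightarrow> abs_cont_on 0 (hlen \<mu> \<gamma>) (f \<circ> gamma_h \<mu> \<gamma>)"
    using f_ACC unfolding ACC_p_def p_ae_paths_def by blast
  have spm: "space m = UNIV" using sets_eq_imp_space_eq[OF m_borel] by simp
  obtain N where Nsub: "{x \<in> space m. \<not> (x \<in> F \<longrightarrow> f x = 0)} \<subseteq> N"
    and N0: "emeasure m N = 0" and Nm: "N \<in> sets m"
    using f_zero by (rule AE_E)
  have Nb: "N \<in> sets borel" using Nm m_borel by simp
  have fz: "f x = 0" if "x \<in> F" "x \<notin> N" for x using Nsub that spm by auto
  define \<Gamma>2 where "\<Gamma>2 = {\<gamma>\<in>\<Gamma>s. emeasure \<mu> (pIm \<gamma> \<inter> N) \<noteq> 0}"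
  define \<Gamma>0 where "\<Gamma>0 = \<Gamma>1 \<union> \<Gamma>2"
  have pIm_sets: "pIm \<gamma> \<in> sets \<mu>" if "\<gamma> \<in> \<Gamma>s" for \<gamma>
  proof -
    have "is_cpath \<gamma>" using that Gs_sub unfolding Gamma_mu_def by auto
    then have "continuous_on {pa \<gamma>..pb \<gamma>} (pf \<gamma>)" unfolding is_cpath_def by blast
    then have "compact (pIm \<gamma>)" unfolding pIm_def by (intro compact_continuous_image) auto
    then show ?thesis using mu_borel by (simp add: compact_imp_closed)
  qed
  have Mod0: "Modp p m \<mu> \<Gamma>0 = 0"
  proof -
    have "Modp p m \<mu> \<Gamma>0 \<le> Modp p m \<mu> \<Gamma>1"
      unfolding Modp_def
    proof (rule INF_mono)
      fix g assume g: "g \<in> {g. g \<in> borel_measurable borel \<and> (\<forall>\<gamma>\<in>\<Gamma>1. 1 \<le> line_int \<mu> \<gamma> g)}"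
      define g' where "g' x = (if x \<in> N then \<infinity> else g x)" for x
      have g'm: "g' \<in> borel_measurable borel"
        unfolding g'_def by (rule measurable_If_set) (use g Nb in auto)
      have gg': "g x \<le> g' x" for x unfolding g'_def by auto
      have adm: "1 \<le> line_int \<mu> \<gamma> g'" if "\<gamma> \<in> \<Gamma>0" for \<gamma>
      proof (cases "\<gamma> \<in> \<Gamma>1")
        case True
        then have "1 \<le> line_int \<mu> \<gamma> g" using g by auto
        also have "\<dots> \<le> line_int \<mu> \<gamma> g'"
          unfolding line_int_def by (intro nn_integral_mono) (auto simp: gg' indicator_def)
        finally show ?thesis .
      next
        case False
        then have G2: "\<gamma> \<in> \<Gamma>2" using that unfolding \<Gamma>0_def by auto
        then have gs: "\<gamma> \<in> \<Gamma>s" and ne: "emeasure \<mu> (pIm \<gamma> \<inter> N) \<noteq> 0" unfolding \<Gamma>2_def by auto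
        have s: "pIm \<gamma> \<inter> N \<in> sets \<mu>" using pIm_sets[OF gs] Nb mu_borel by auto
        have "(\<integral>\<^sup>+x. \<infinity> * indicator (pIm \<gamma> \<inter> N) x \<partial>\<mu>) \<le> line_int \<mu> \<gamma> g'"
          unfolding line_int_def by (intro nn_integral_mono) (auto simp: g'_def indicator_def)
        moreover have "(\<integral>\<^sup>+x. \<infinity> * indicator (pIm \<gamma> \<inter> N) x \<partial>\<mu>) = \<infinity> * emeasure \<mu> (pIm \<gamma> \<inter> N)"
          by (rule nn_integral_cmult_indicator[OF s])
        moreover have "\<infinity> * emeasure \<mu> (pIm \<gamma> \<inter> N) = \<infinity>" using ne by (simp add: ennreal_mult_eq_top_iff)
        ultimately show ?thesis by (simp add: top_unique)
      qed
      have "(\<integral>\<^sup>+x. epowr (g' x) p \<partial>m) = (\<integral>\<^sup>+x. epowr (g x) p \<partial>m)"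
      proof (rule nn_integral_cong_AE)
        have "AE x in m. x \<notin> N" using N0 Nm by (intro AE_not_in) auto
        then show "AE x in m. epowr (g' x) p = epowr (g x) p"
          by eventually_elim (simp add: g'_def)
      qed
      moreover have "g' \<in> {g. g \<in> borel_measurable borel \<and> (\<forall>\<gamma>\<in>\<Gamma>0. 1 \<le> line_int \<mu> \<gamma> g)}"
        using g'm adm by auto
      ultimately show "\<exists>n\<in>{g. g \<in> borel_measurable borel \<and> (\<forall>\<gamma>\<in>\<Gamma>0. 1 \<le> line_int \<mu> \<gamma> g)}.
          (\<integral>\<^sup>+x. epowr (n x) p \<partial>m) \<le> (\<integral>\<^sup>+x. epowr (g x) p \<partial>m)"
        by (intro bexI[of _ g']) auto
    qed
    then show ?thesis using G1(2) by simp
  qed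
  have ineq: "upper_gradient_ineq \<mu> f \<rho>' \<gamma>" if \<gamma>: "\<gamma> \<in> \<Gamma>s - \<Gamma>0" for \<gamma>
  proof -
    have gs: "\<gamma> \<in> \<Gamma>s" using \<gamma> by auto
    have N2: "emeasure \<mu> (pIm \<gamma> \<inter> N) = 0" using \<gamma> unfolding \<Gamma>0_def \<Gamma>2_def by auto
    have ac: "abs_cont_on 0 (hlen \<mu> \<gamma>) (f \<circ> gamma_h \<mu> \<gamma>)" using \<gamma> G1ac unfolding \<Gamma>0_def by auto
    have UGs: "ennreal \<bar>f (pf \<gamma> c) - f (pf \<gamma> d)\<bar> \<le> (\<integral>\<^sup>+x\<in>pf \<gamma> ` {c..d}. \<rho>' x \<partial>\<mu>)"
      if cd: "pa \<gamma> \<le> c" "c < d" "d \<le> pb \<gamma>" "pf \<gamma> ` {c..d} \<inter> F = {}" for c d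
    proof -
      obtain \<delta> where \<delta>: "\<delta> \<in> \<Gamma>s" "is_restriction \<gamma> c d \<delta>" using Gs_subpaths[OF gs cd(1-3)] by blast
      have d1: "pa \<delta> = c" "pb \<delta> = d" "\<And>t. t \<in> {c..d} \<Longrightarrow> pf \<delta> t = pf \<gamma> t"
        using \<delta>(2) unfolding is_restriction_def by auto
      have im: "pIm \<delta> = pf \<gamma> ` {c..d}" unfolding pIm_def d1(1,2) using d1(3) by auto
      have "upper_gradient_ineq \<mu> f \<rho> \<delta>" using rho_ug \<delta>(1) unfolding upper_gradient_def by blast
      then have "ennreal \<bar>f (pf \<gamma> c) - f (pf \<gamma> d)\<bar> \<le> (\<integral>\<^sup>+x\<in>pf \<gamma> ` {c..d}. \<rho> x \<partial>\<mu>)"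
        unfolding upper_gradient_ineq_def line_int_def im d1(1,2) using d1(3)[of c] d1(3)[of d] cd(2)
        by simp
      also have "\<dots> = (\<integral>\<^sup>+x\<in>pf \<gamma> ` {c..d}. \<rho>' x \<partial>\<mu>)"
        by (intro nn_integral_cong) (use cd(4) in \<open>auto simp: \<rho>'_def indicator_def\<close>)
      finally show ?thesis .
    qed
    have "ennreal \<bar>f (pf \<gamma> (pa \<gamma>)) - f (pf \<gamma> (pb \<gamma>))\<bar> \<le> line_int \<mu> \<gamma> \<rho>'"
      by (rule path_ineq[OF mu_borel mu_nonatomic _ rho'm F_closed Nb N2 fz UGs ac])
         (use gs Gs_sub in auto)
    then show ?thesis unfolding upper_gradient_ineq_def .
  qed
  have "p_ae_paths p m \<mu> \<Gamma>s (upper_gradient_ineq \<mu> f \<rho>')"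
    unfolding p_ae_paths_def
  proof (intro exI[of _ \<Gamma>0] conjI ballI)
    show "\<Gamma>0 \<subseteq> \<Gamma>s" using G1(1) unfolding \<Gamma>0_def \<Gamma>2_def by auto
    show "Modp p m \<mu> \<Gamma>0 = 0" by (rule Mod0)
  next
    fix \<gamma> assume "\<gamma> \<in> \<Gamma>s - \<Gamma>0"
    then show "upper_gradient_ineq \<mu> f \<rho>' \<gamma>" by (rule ineq)
  qed
  then show ?thesis unfolding weak_upper_gradient_def \<rho>'_def[symmetric] using rho'm by blast
qed

end
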